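(* Let $j\in\mathbb Z$, and let $\lambda,\mu$ be partitions such that $\lambda$ has an addable node $\mathfrak l$ in column $j$ and $\mu$ has an addable node in column $j$; set $\lambda^+=\lambda\cup\{\mathfrak l\}$. Then $\mathrm e_{\lambda^+\mu}=\mathrm e_{\lambda\mu}$.
   Context: Partitions are identified with Young diagrams $\{(a,b)\in\mathbb N^2:b\le\lambda_a\}$; nodes are elements of $\mathbb N^2$; $(a,b)$ has height $a+b$ and lies in column $b-a$ (smaller column = further left). An addable node of $\lambda$ is a node not in $\lambda$ whose addition gives a partition. $\mathtt{NE}(\mathfrak n)=\mathfrak n+(0,1)$, $\mathtt{SW}(\mathfrak n)=\mathfrak n-(0,1)$, $\mathtt{SE}(\mathfrak n)=\mathfrak n-(1,0)$. A tile is a finite nonempty set of nodes orderable $\mathfrak n_1,\dots,\mathfrak n_r$ with $\mathfrak n_{i+1}\in\{\mathtt{NE}(\mathfrak n_i),\mathtt{SE}(\mathfrak n_i)\}$; start = leftmost node, end = rightmost node; Dyck tile if start and end both attain the maximal height of its nodes. A Dyck tiling of $\lambda\setminus\mu$ is a partition of it into Dyck tiles. It is cover-expansive if whenever $\mathfrak a,\mathtt{SE}(\mathfrak a)\in\lambda\setminus\mu$, the tile of $\mathtt{SE}(\mathfrak a)$ starts weakly left of the start of the tile of $\mathfrak a$, and whenever $\mathfrak a,\mathtt{SW}(\mathfrak a)\in\lambda\setminus\mu$, the tile of $\mathtt{SW}(\mathfrak a)$ ends weakly right of the end of the tile of $\mathfrak a$. $\mathrm e_{\lambda\mu}$ is the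 number of cover-expansive Dyck tilings of $\lambda\setminus\mu$ if $\lambda\supseteq\mu$, and $0$ otherwise. *)

theory Defs
  imports "HOL-Library.Disjoint_Sets"
begin

type_synonym node = "int \<times> int"

definition is_partition :: "nat list \<Rightarrow> bool" where
  "is_partition lam \<longleftrightarrow> sorted_wrt (\<ge>) lam \<and> 0 \<notin> set lam"

text \<open>Young diagram: nodes (a,b) with a, b \<ge> 1 and b \<le> lam_a (rows indexed from 1).\<close>
definition young :: "nat list \<Rightarrow> node set" where
  "young lam = {(a, b). 1 \<le> a \<and> a \<le> int (length lam) \<and> 1 \<le> b \<and> b \<le> int (lam ! nat (a - 1))}"

definition height :: "node \<Rightarrow> int" where
  "height n = fst n + snd n"

definition col :: "node \<Rightarrow> int" where
  "col n = snd n - fst n"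

definition NE :: "node \<Rightarrow> node" where "NE n = (fst n, snd n + 1)"
definition SW :: "node \<Rightarrow> node" where "SW n = (fst n, snd n - 1)"
definition SE :: "node \<Rightarrow> node" where "SE n = (fst n - 1, snd n)"

definition addable :: "nat list \<Rightarrow> node \<Rightarrow> bool" where
  "addable lam n \<longleftrightarrow> n \<notin> young lam \<and> (\<exists>nu. is_partition nu \<and> young nu = insert n (young lam))"

definition is_tile :: "node set \<Rightarrow> bool" where
  "is_tile T \<longleftrightarrow> (\<exists>ns. ns \<noteq> [] \<and> set ns = T \<and>
      (\<forall>i. Suc i < length ns \<longrightarrow> ns ! Suc i \<in> {NE (ns ! i), SE (ns ! i)}))"

definition tile_start :: "node set \<Rightarrow> node" where
  "tile_start T = (THE n. n \<in> T \<and> (\<forall>m\<in>T. col n \<le> col m))"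

definition tile_end :: "node set \<Rightarrow> node" where
  "tile_end T = (THE n. n \<in> T \<and> (\<forall>m\<in>T. col m \<le> col n))"

definition is_dyck_tile :: "node set \<Rightarrow> bool" where
  "is_dyck_tile T \<longleftrightarrow> is_tile T \<and>
      height (tile_start T) = Max (height ` T) \<and> height (tile_end T) = Max (height ` T)"

definition dyck_tiling :: "node set \<Rightarrow> node set set \<Rightarrow> bool" where
  "dyck_tiling S P \<longleftrightarrow> partition_on S P \<and> (\<forall>T\<in>P. is_dyck_tile T)"

definition tile_of :: "node set set \<Rightarrow> node \<Rightarrow> node set" where
  "tile_of P x = (THE T. T \<in> P \<and> x \<in> T)"

definition cover_expansive :: "node set \<Rightarrow> node set set \<Rightarrow> bool" where
  "cover_expansive S P \<longleftrightarrow>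
     (\<forall>a. a \<in> S \<and> SE a \<in> S \<longrightarrow> col (tile_start (tile_of P (SE a))) \<le> col (tile_start (tile_of P a))) \<and>
     (\<forall>a. a \<in> S \<and> SW a \<in> S \<longrightarrow> col (tile_end (tile_of P a)) \<le> col (tile_end (tile_of P (SW a))))"

definition e_num :: "nat list \<Rightarrow> nat list \<Rightarrow> nat" where
  "e_num lam mu = (if young mu \<subseteq> young lam
     then card {P. dyck_tiling (young lam - young mu) P \<and> cover_expansive (young lam - young mu) P}
     else 0)"

end

theory Submission
  imports Defs
begin

lemma young_pos: "(a,b) \<in> young lam \<Longrightarrow> 1 \<le> a \<and> 1 \<le> b"
  by (simp add: young_def)

lemma young_down:
  assumes p: "is_partition lam" and y: "(a,b) \<in> young lam"
    and "1 \<le> a'" "a' \<le> a" "1 \<le> b'" "b' \<le> b"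
  shows "(a',b') \<in> young lam"
proof -
  have s: "sorted_wrt (\<ge>) lam" using p by (simp add: is_partition_def)
  have a: "1 \<le> a" "a \<le> int (length lam)" "b \<le> int (lam ! nat (a - 1))" using y by (auto simp: young_def)
  have "lam ! nat (a - 1) \<le> lam ! nat (a' - 1)"
  proof (cases "a' = a")
    case False
    then have "nat (a' - 1) < nat (a - 1)" using assms by auto
    moreover have "nat (a - 1) < length lam" using a by auto
    ultimately show ?thesis using sorted_wrt_nth_less[OF s] by blast
  qed simp
  then show ?thesis using assms a by (auto simp: young_def)
qed

section \<open>Tiles\<close>

lemma col_NE[simp]: "col (NE x) = col x + 1" by (simp add: col_def NE_def)
lemma col_SE[simp]: "col (SE x) = col x + 1" by (simp add: col_def SE_def)
lemma col_SW[simp]: "col (SW x) = col x - 1" by (simp add: col_def SW_def)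

lemma tile_col_nth:
  assumes "\<forall>i. Suc i < length ns \<longrightarrow> ns ! Suc i \<in> {NE (ns ! i), SE (ns ! i)}" "i < length ns"
  shows "col (ns!i) = col (ns!0) + int i"
  using assms(2)
proof (induction i)
  case (Suc i)
  then have "ns ! Suc i \<in> {NE (ns ! i), SE (ns ! i)}" using assms(1) by blast
  then have "col (ns ! Suc i) = col (ns ! i) + 1" by auto
  with Suc show ?case by simp
qed simp

lemma tile_inj:
  assumes "is_tile T" "x \<in> T" "y \<in> T" "col x = col y" shows "x = y"
proof -
  obtain ns where ns: "ns \<noteq> []" "set ns = T"
    "\<forall>i. Suc i < length ns \<longrightarrow> ns ! Suc i \<in> {NE (ns ! i), SE (ns ! i)}"
    using assms(1) unfolding is_tile_def by blast
  obtain i where i: "i < length ns" "x = ns ! i" using assms(2) ns(2) by (auto simp: in_set_conv_nth)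
  obtain k where k: "k < length ns" "y = ns ! k" using assms(3) ns(2) by (auto simp: in_set_conv_nth)
  have "col x = col (ns!0) + int i" "col y = col (ns!0) + int k"
    using tile_col_nth[OF ns(3)] i k by auto
  then have "i = k" using assms(4) by simp
  then show ?thesis using i k by simp
qed

lemma tile_ns:
  assumes "is_tile T"
  obtains ns where "ns \<noteq> []" "set ns = T"
    "\<forall>i. Suc i < length ns \<longrightarrow> ns ! Suc i \<in> {NE (ns ! i), SE (ns ! i)}"
    "tile_start T = ns ! 0" "tile_end T = ns ! (length ns - 1)"
proof -
  obtain ns where ns: "ns \<noteq> []" "set ns = T"
    "\<forall>i. Suc i < length ns \<longrightarrow> ns ! Suc i \<in> {NE (ns ! i), SE (ns ! i)}"
    using assms(1) unfolding is_tile_def by blast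
  have c: "col (ns!i) - col (ns!0) = int i" if ci: "i < length ns" for i
  proof -
    have "col (ns!i) = col (ns!0) + int i" by (rule tile_col_nth[OF ns(3) ci])
    then show ?thesis by linarith
  qed
  have mem: "\<exists>i<length ns. z = ns!i" if "z \<in> T" for z
    using that ns(2) by (metis in_set_conv_nth)
  have n0: "ns!0 \<in> T" using ns(1,2) by (metis length_greater_0_conv nth_mem)
  have nl: "ns!(length ns - 1) \<in> T"
  proof -
    have "length ns - 1 < length ns" using ns(1) by simp
    then show ?thesis using ns(2) nth_mem by blast
  qed
  have lo: "col (ns!0) \<le> col z" if zT: "z \<in> T" for z
  proof -
    obtain i where i: "i < length ns" "z = ns!i" using mem[OF zT] by blast
    have "col z - col (ns!0) = int i" using c[OF i(1)] i(2) by simp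
    then show ?thesis by linarith
  qed
  have hi: "col z \<le> col (ns!(length ns - 1))" if zT: "z \<in> T" for z
  proof -
    obtain i where i: "i < length ns" "z = ns!i" using mem[OF zT] by blast
    have "length ns - 1 < length ns" using ns(1) by simp
    then have "col (ns!(length ns - 1)) - col (ns!0) = int (length ns - 1)" by (rule c)
    moreover have "col z - col (ns!0) = int i" using c[OF i(1)] i(2) by simp
    moreover have "int i \<le> int (length ns - 1)" using i by simp
    ultimately show ?thesis by linarith
  qed
  have s: "tile_start T = ns ! 0"
    unfolding tile_start_def
  proof (rule the_equality)
    show "ns ! 0 \<in> T \<and> (\<forall>m\<in>T. col (ns ! 0) \<le> col m)" using n0 lo by blast
  next
    fix n assume n: "n \<in> T \<and> (\<forall>m\<in>T. col n \<le> col m)"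
    have "col (ns!0) \<le> col n" using lo n by blast
    moreover have "col n \<le> col (ns!0)" using n n0 by blast
    ultimately have "col n = col (ns!0)" by linarith
    then show "n = ns ! 0" by (rule tile_inj[OF assms n[THEN conjunct1] n0])
  qed
  have e: "tile_end T = ns ! (length ns - 1)"
    unfolding tile_end_def
  proof (rule the_equality)
    show "ns ! (length ns - 1) \<in> T \<and> (\<forall>m\<in>T. col m \<le> col (ns ! (length ns - 1)))"
      using nl hi by blast
  next
    fix n assume n: "n \<in> T \<and> (\<forall>m\<in>T. col m \<le> col n)"
    have "col n \<le> col (ns ! (length ns - 1))" using hi n by blast
    moreover have "col (ns ! (length ns - 1)) \<le> col n" using n nl by blast
    ultimately have "col n = col (ns ! (length ns - 1))" by linarith
    then show "n = ns ! (length ns - 1)" by (rule tile_inj[OF assms n[THEN conjunct1] nl])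
  qed
  show ?thesis by (rule that[OF ns(1) ns(2) ns(3) s e])
qed

lemma tile_bounds:
  assumes "is_tile T" "x \<in> T"
  shows "tile_start T \<in> T" "tile_end T \<in> T" "col (tile_start T) \<le> col x" "col x \<le> col (tile_end T)"
proof -
  obtain ns where ns: "ns \<noteq> []" "set ns = T"
    "\<forall>i. Suc i < length ns \<longrightarrow> ns ! Suc i \<in> {NE (ns ! i), SE (ns ! i)}"
    "tile_start T = ns ! 0" "tile_end T = ns ! (length ns - 1)"
    using tile_ns[OF assms(1)] by blast
  have c: "col (ns!i) - col (ns!0) = int i" if ci: "i < length ns" for i
  proof -
    have "col (ns!i) = col (ns!0) + int i" by (rule tile_col_nth[OF ns(3) ci])
    then show ?thesis by linarith
  qed
  show "tile_start T \<in> T" "tile_end T \<in> T" using ns by auto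
  obtain i where i: "i < length ns" "x = ns ! i" using assms(2) ns(2) by (auto simp: in_set_conv_nth)
  have "length ns - 1 < length ns" using ns(1) by simp
  then have "col (ns!(length ns - 1)) - col (ns!0) = int (length ns - 1)" by (rule c)
  moreover have "col x - col (ns!0) = int i" using c[OF i(1)] i(2) by simp
  moreover have "int i \<le> int (length ns - 1)" using i by simp
  ultimately show "col (tile_start T) \<le> col x" "col x \<le> col (tile_end T)" unfolding ns(4,5) by linarith+
qed

lemma tile_succ:
  assumes "is_tile T" "x \<in> T" "col x < col (tile_end T)"
  shows "NE x \<in> T \<or> SE x \<in> T"
proof -
  obtain ns where ns: "ns \<noteq> []" "set ns = T"
    "\<forall>i. Suc i < length ns \<longrightarrow> ns ! Suc i \<in> {NE (ns ! i), SE (ns ! i)}"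
    "tile_start T = ns ! 0" "tile_end T = ns ! (length ns - 1)"
    using tile_ns[OF assms(1)] by blast
  have c: "col (ns!i) - col (ns!0) = int i" if ci: "i < length ns" for i
  proof -
    have "col (ns!i) = col (ns!0) + int i" by (rule tile_col_nth[OF ns(3) ci])
    then show ?thesis by linarith
  qed
  obtain i where i: "i < length ns" "x = ns ! i" using assms(2) ns(2) by (auto simp: in_set_conv_nth)
  have "length ns - 1 < length ns" using ns(1) by simp
  then have "col (ns!(length ns - 1)) - col (ns!0) = int (length ns - 1)" by (rule c)
  moreover have "col x - col (ns!0) = int i" using c[OF i(1)] i(2) by simp
  moreover have "col x < col (ns!(length ns - 1))" using assms(3) ns(5) by simp
  ultimately have "i < length ns - 1" by linarith
  then have "Suc i < length ns" by simp
  then have "ns ! Suc i \<in> T" "ns ! Suc i \<in> {NE x, SE x}" using ns i by auto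
  then show ?thesis by auto
qed

lemma tile_pred:
  assumes "is_tile T" "x \<in> T" "col (tile_start T) < col x"
  shows "SW x \<in> T \<or> (fst x + 1, snd x) \<in> T"
proof -
  obtain ns where ns: "ns \<noteq> []" "set ns = T"
    "\<forall>i. Suc i < length ns \<longrightarrow> ns ! Suc i \<in> {NE (ns ! i), SE (ns ! i)}"
    "tile_start T = ns ! 0" "tile_end T = ns ! (length ns - 1)"
    using tile_ns[OF assms(1)] by blast
  obtain i where i: "i < length ns" "x = ns ! i" using assms(2) ns(2) by (auto simp: in_set_conv_nth)
  have "i \<noteq> 0"
  proof
    assume "i = 0" then show False using assms(3) i ns by simp
  qed
  then obtain k where k: "i = Suc k" by (cases i) auto
  then have "ns ! k \<in> T" "x \<in> {NE (ns!k), SE (ns!k)}" using ns i by auto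
  moreover have "SW (NE y) = y" for y by (simp add: NE_def SW_def)
  moreover have "(fst (SE y) + 1, snd (SE y)) = y" for y by (simp add: SE_def)
  ultimately show ?thesis by (metis insertE singletonD)
qed

lemma tile_start_single[simp]: "tile_start {n} = n" unfolding tile_start_def by (rule the_equality) auto
lemma tile_end_single[simp]: "tile_end {n} = n" unfolding tile_end_def by (rule the_equality) auto

lemma dyck_single: "is_dyck_tile {n}"
  unfolding is_dyck_tile_def is_tile_def by (auto intro!: exI[of _ "[n]"])

lemma tile_of_eq:
  assumes "partition_on S P" "T \<in> P" "x \<in> T" shows "tile_of P x = T"
  unfolding tile_of_def
proof (rule the_equality)
  show "T \<in> P \<and> x \<in> T" using assms by simp
  fix U assume "U \<in> P \<and> x \<in> U"
  then show "U = T" using assms partition_onD2[OF assms(1)]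
    by (auto simp: disjoint_def disjnt_def)
qed

lemma tile_of_mem:
  assumes "partition_on S P" "x \<in> S" shows "tile_of P x \<in> P" "x \<in> tile_of P x"
proof -
  obtain T where "T \<in> P" "x \<in> T" using assms partition_onD1[OF assms(1)] by blast
  then show "tile_of P x \<in> P" "x \<in> tile_of P x" using tile_of_eq[OF assms(1)] by auto
qed

lemma tile_sub: "partition_on S P \<Longrightarrow> T \<in> P \<Longrightarrow> T \<subseteq> S"
  using partition_onD1 by blast

lemma ce_D1: "cover_expansive S P \<Longrightarrow> a \<in> S \<Longrightarrow> SE a \<in> S \<Longrightarrow>
   col (tile_start (tile_of P (SE a))) \<le> col (tile_start (tile_of P a))"
  unfolding cover_expansive_def by blast

lemma ce_D2: "cover_expansive S P \<Longrightarrow> a \<in> S \<Longrightarrow> SW a \<in> S \<Longrightarrow>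
   col (tile_end (tile_of P a)) \<le> col (tile_end (tile_of P (SW a)))"
  unfolding cover_expansive_def by blast

section \<open>The chain in column j\<close>

lemma chain:
  fixes x :: "nat \<Rightarrow> node"
  assumes dt: "dyck_tiling S P" and ce: "cover_expansive S P"
    and x: "\<And>k. x k = (fst m + int k, snd m + int k)"
    and seM: "SE m \<notin> S" and swM: "SW m \<notin> S"
    and inS: "\<And>k. k \<le> N \<Longrightarrow> x k \<in> S"
  shows "k \<le> N \<Longrightarrow> SE (x k) \<notin> tile_of P (x k) \<and> SW (x k) \<notin> tile_of P (x k)"
proof (induction k)
  case 0
  have pt: "partition_on S P" using dt by (simp add: dyck_tiling_def)
  have "x 0 = m" using x by simp
  have "x 0 \<in> S" using inS by simp
  then have "tile_of P m \<subseteq> S" using tile_of_mem[OF pt] tile_sub[OF pt] \<open>x 0 = m\<close> by blast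
  then show ?case using seM swM \<open>x 0 = m\<close> by auto
next
  case (Suc k)
  have pt: "partition_on S P" using dt by (simp add: dyck_tiling_def)
  have tl: "\<And>T. T \<in> P \<Longrightarrow> is_tile T" using dt by (auto simp: dyck_tiling_def is_dyck_tile_def)
  have IH: "SE (x k) \<notin> tile_of P (x k)" "SW (x k) \<notin> tile_of P (x k)" using Suc by auto
  have xk: "x k \<in> S" "x (Suc k) \<in> S" using inS Suc.prems by auto
  have geo: "SW (SE (x (Suc k))) = x k" "SE (SW (x (Suc k))) = x k" "NE (x k) = SE (x (Suc k))"
    "(fst (x k) + 1, snd (x k)) = SW (x (Suc k))" "col (x (Suc k)) = col (x k)" "x (Suc k) \<noteq> x k"
    using x[of k] x[of "Suc k"] by (auto simp: SW_def SE_def NE_def col_def)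
  define T where "T = tile_of P (x (Suc k))"
  define U where "U = tile_of P (x k)"
  have T: "T \<in> P" "x (Suc k) \<in> T" using tile_of_mem[OF pt xk(2)] T_def by auto
  have U: "U \<in> P" "x k \<in> U" using tile_of_mem[OF pt xk(1)] U_def by auto
  show ?case
  proof (intro conjI notI)
    assume h: "SE (x (Suc k)) \<in> tile_of P (x (Suc k))"
    then have hT: "SE (x (Suc k)) \<in> T" by (simp add: T_def)
    have hS: "SE (x (Suc k)) \<in> S" using tile_sub[OF pt T(1)] hT by auto
    have tT: "tile_of P (SE (x (Suc k))) = T" using tile_of_eq[OF pt T(1) hT] .
    have "col (tile_end (tile_of P (SE (x (Suc k))))) \<le> col (tile_end (tile_of P (SW (SE (x (Suc k))))))"
      using ce_D2[OF ce hS] xk geo by simp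
    then have c1: "col (tile_end T) \<le> col (tile_end U)" using tT geo U_def by simp
    have "col (SE (x (Suc k))) \<le> col (tile_end T)" using tile_bounds(4)[OF tl[OF T(1)] hT] .
    then have "col (x k) < col (tile_end U)" using c1 geo by simp
    then have "NE (x k) \<in> U \<or> SE (x k) \<in> U" using tile_succ[OF tl[OF U(1)] U(2)] by blast
    then show False
    proof
      assume "NE (x k) \<in> U"
      then have "U = T" using tile_of_eq[OF pt U(1)] tT geo by metis
      then show False using tile_inj[OF tl[OF T(1)] T(2)] U(2) geo by auto
    next
      assume "SE (x k) \<in> U" then show False using IH U_def by simp
    qed
  next
    assume h: "SW (x (Suc k)) \<in> tile_of P (x (Suc k))"
    then have hT: "SW (x (Suc k)) \<in> T" by (simp add: T_def)
    have hS: "SW (x (Suc k)) \<in> S" using tile_sub[OF pt T(1)] hT by auto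
    have tT: "tile_of P (SW (x (Suc k))) = T" using tile_of_eq[OF pt T(1) hT] .
    have "col (tile_start (tile_of P (SE (SW (x (Suc k)))))) \<le> col (tile_start (tile_of P (SW (x (Suc k)))))"
      using ce_D1[OF ce hS] xk geo by simp
    then have c1: "col (tile_start U) \<le> col (tile_start T)" using tT geo U_def by simp
    have "col (tile_start T) \<le> col (SW (x (Suc k)))" using tile_bounds(3)[OF tl[OF T(1)] hT] .
    then have "col (tile_start U) < col (x k)" using c1 geo by simp
    then have "SW (x k) \<in> U \<or> (fst (x k) + 1, snd (x k)) \<in> U" using tile_pred[OF tl[OF U(1)] U(2)] by blast
    then show False
    proof
      assume "SW (x k) \<in> U" then show False using IH U_def by simp
    next
      assume "(fst (x k) + 1, snd (x k)) \<in> U"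
      then have "U = T" using tile_of_eq[OF pt U(1)] tT geo by metis
      then show False using tile_inj[OF tl[OF T(1)] T(2)] U(2) geo by auto
    qed
  qed
qed

section \<open>Adding the node\<close>

lemma key:
  fixes S :: "node set" and l m :: node and K :: nat and x :: "nat \<Rightarrow> node"
  assumes x: "\<And>k. x k = (fst m + int k, snd m + int k)"
    and lK: "x K = l" and lS: "l \<notin> S"
    and xS: "\<And>k. k < K \<Longrightarrow> x k \<in> S"
    and seM: "SE m \<notin> insert l S" and swM: "SW m \<notin> insert l S"
    and ne: "NE l \<notin> insert l S" and up: "(fst l + 1, snd l) \<notin> insert l S"
  shows "card {Q. dyck_tiling (insert l S) Q \<and> cover_expansive (insert l S) Q}
       = card {P. dyck_tiling S P \<and> cover_expansive S P}"
proof -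
  define A where "A = {P. dyck_tiling S P \<and> cover_expansive S P}"
  define B where "B = {Q. dyck_tiling (insert l S) Q \<and> cover_expansive (insert l S) Q}"
  have nl: "{l} \<notin> P" if "P \<in> A" for P
  proof
    assume "{l} \<in> P"
    moreover have "partition_on S P" using that by (simp add: A_def dyck_tiling_def)
    ultimately show False using tile_sub lS by blast
  qed
  have inj: "inj_on (insert {l}) A"
  proof (rule inj_onI)
    fix P P' assume "P \<in> A" "P' \<in> A" "insert {l} P = insert {l} P'"
    then show "P = P'" using nl by (metis insert_ident)
  qed
  have geoK: "SE l = NE (x K') \<and> SW l = (fst (x K') + 1, snd (x K')) \<and> col (x K') = col l
      \<and> SW (SE l) = x K' \<and> SE (SW l) = x K'" if "K = Suc K'" for K'
  proof -
    have "l = (fst m + int K' + 1, snd m + int K' + 1)" using x[of K] lK that by (simp add: algebra_simps)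
    then show ?thesis using x[of K'] by (auto simp: SE_def SW_def NE_def col_def)
  qed
  have K0: "K \<noteq> 0" if "SE l \<in> S \<or> SW l \<in> S"
  proof
    assume "K = 0"
    then have "l = m" using lK x[of 0] by simp
    then show False using that seM swM by auto
  qed
  have fwd: "insert {l} P \<in> B" if "P \<in> A" for P
  proof -
    have dt: "dyck_tiling S P" and ce: "cover_expansive S P" using that A_def by auto
    have pt: "partition_on S P" using dt by (simp add: dyck_tiling_def)
    have tl: "\<And>T. T \<in> P \<Longrightarrow> is_tile T" using dt by (auto simp: dyck_tiling_def is_dyck_tile_def)
    have pQ: "partition_on (insert l S) (insert {l} P)"
    proof -
      have dj: "disjnt {l} (\<Union>P)" using partition_onD1[OF pt] lS by (simp add: disjnt_def)
      have eq: "insert l S - {l} = S" using lS by auto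
      have "partition_on (insert l S) (insert {l} P) \<longleftrightarrow>
          partition_on (insert l S - {l}) P \<and> {l} \<subseteq> insert l S \<and> {l} \<noteq> {}"
        by (rule partition_on_insert[OF dj])
      then show ?thesis using pt eq by simp
    qed
    have dQ: "dyck_tiling (insert l S) (insert {l} P)"
      using pQ dt dyck_single unfolding dyck_tiling_def by blast
    have tQ: "tile_of (insert {l} P) y = tile_of P y" if yS: "y \<in> S" for y
      by (rule tile_of_eq[OF pQ insertI2[OF tile_of_mem(1)[OF pt yS]] tile_of_mem(2)[OF pt yS]])
    have tQl: "tile_of (insert {l} P) l = {l}" by (rule tile_of_eq[OF pQ insertI1 singletonI])
    have i: "col (tile_start (tile_of P (SE l))) \<le> col l" if hS: "SE l \<in> S"
    proof (rule ccontr)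
      assume nc: "\<not> ?thesis"
      obtain K' where K': "K = Suc K'" using K0 hS by (cases K) auto
      define y where "y = x K'"
      have geo: "SE l = NE y" "col y = col l" "SW (SE l) = y" using geoK[OF K'] y_def by auto
      have yS: "y \<in> S" using xS K' y_def by simp
      have ch: "SE y \<notin> tile_of P y"
        using chain[OF dt ce x, of K' K'] seM swM xS K' y_def by auto
      define T where "T = tile_of P (SE l)"
      define U where "U = tile_of P y"
      have T: "T \<in> P" "SE l \<in> T" using tile_of_mem[OF pt that] T_def by auto
      have U: "U \<in> P" "y \<in> U" using tile_of_mem[OF pt yS] U_def by auto
      have "col (tile_end T) \<le> col (tile_end U)"
        using ce_D2[OF ce that] geo yS T_def U_def by simp
      moreover have "col (SE l) \<le> col (tile_end T)" using tile_bounds(4)[OF tl[OF T(1)] T(2)] .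
      ultimately have "col y < col (tile_end U)" using geo by simp
      then have "NE y \<in> U \<or> SE y \<in> U" using tile_succ[OF tl[OF U(1)] U(2)] by blast
      then show False
      proof
        assume "NE y \<in> U"
        then have "U = T" using tile_of_eq[OF pt U(1)] geo T_def by metis
        then have "col (tile_start T) \<le> col y" using tile_bounds(3)[OF tl[OF T(1)]] U(2) by blast
        then show False using nc geo T_def by simp
      next
        assume "SE y \<in> U" then show False using ch U_def by simp
      qed
    qed
    have ii: "col l \<le> col (tile_end (tile_of P (SW l)))" if hS: "SW l \<in> S"
    proof (rule ccontr)
      assume nc: "\<not> ?thesis"
      obtain K' where K': "K = Suc K'" using K0 hS by (cases K) auto
      define y where "y = x K'"
      have geo: "SW l = (fst y + 1, snd y)" "col y = col l" "SE (SW l) = y" using geoK[OF K'] y_def by auto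
      have yS: "y \<in> S" using xS K' y_def by simp
      have ch: "SW y \<notin> tile_of P y"
        using chain[OF dt ce x, of K' K'] seM swM xS K' y_def by auto
      define T where "T = tile_of P (SW l)"
      define U where "U = tile_of P y"
      have T: "T \<in> P" "SW l \<in> T" using tile_of_mem[OF pt that] T_def by auto
      have U: "U \<in> P" "y \<in> U" using tile_of_mem[OF pt yS] U_def by auto
      have "col (tile_start U) \<le> col (tile_start T)"
        using ce_D1[OF ce that] geo yS T_def U_def by simp
      moreover have "col (tile_start T) \<le> col (SW l)" using tile_bounds(3)[OF tl[OF T(1)] T(2)] .
      ultimately have "col (tile_start U) < col y" using geo(2) col_SW[of l] by linarith
      then have "SW y \<in> U \<or> (fst y + 1, snd y) \<in> U" using tile_pred[OF tl[OF U(1)] U(2)] by blast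
      then show False
      proof
        assume "SW y \<in> U" then show False using ch U_def by simp
      next
        assume "(fst y + 1, snd y) \<in> U"
        then have "U = T" using tile_of_eq[OF pt U(1)] geo T_def by metis
        then have "col y \<le> col (tile_end T)" using tile_bounds(4)[OF tl[OF T(1)]] U(2) by blast
        then show False using nc geo T_def by simp
      qed
    qed
    have ceQ: "cover_expansive (insert l S) (insert {l} P)"
      unfolding cover_expansive_def
    proof (intro conjI allI impI)
      fix a assume a: "a \<in> insert l S \<and> SE a \<in> insert l S"
      show "col (tile_start (tile_of (insert {l} P) (SE a))) \<le> col (tile_start (tile_of (insert {l} P) a))"
      proof (cases "a = l")
        case True
        have "SE l \<noteq> l" by (simp add: SE_def prod_eq_iff)
        then have "SE l \<in> S" using a True by auto
        then show ?thesis using i tQ tQl True by simp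
      next
        case False
        have "SE a \<noteq> l"
        proof
          assume "SE a = l"
          then have "a = (fst l + 1, snd l)" by (auto simp: SE_def)
          then show False using a up by simp
        qed
        then have "a \<in> S" "SE a \<in> S" using a False by auto
        then show ?thesis using ce_D1[OF ce] tQ by simp
      qed
    next
      fix a assume a: "a \<in> insert l S \<and> SW a \<in> insert l S"
      show "col (tile_end (tile_of (insert {l} P) a)) \<le> col (tile_end (tile_of (insert {l} P) (SW a)))"
      proof (cases "a = l")
        case True
        have "SW l \<noteq> l" by (simp add: SW_def prod_eq_iff)
        then have "SW l \<in> S" using a True by auto
        then show ?thesis using ii tQ tQl True by simp
      next
        case False
        have "SW a \<noteq> l"
        proof
          assume "SW a = l"
          then have "a = NE l" by (auto simp: SW_def NE_def)
          then show False using a ne by simp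
        qed
        then have "a \<in> S" "SW a \<in> S" using a False by auto
        then show ?thesis using ce_D2[OF ce] tQ by simp
      qed
    qed
    show ?thesis using dQ ceQ B_def by simp
  qed
  have bwd: "Q \<in> insert {l} ` A" if "Q \<in> B" for Q
  proof -
    have dt: "dyck_tiling (insert l S) Q" and ce: "cover_expansive (insert l S) Q" using that B_def by auto
    have pQ: "partition_on (insert l S) Q" using dt by (simp add: dyck_tiling_def)
    have tl: "\<And>T. T \<in> Q \<Longrightarrow> is_tile T" using dt by (auto simp: dyck_tiling_def is_dyck_tile_def)
    have xS': "x k \<in> insert l S" if "k \<le> K" for k
    proof (cases "k = K")
      case True then show ?thesis using lK by simp
    next
      case False then show ?thesis using xS that by simp
    qed
    have "SE (x K) \<notin> tile_of Q (x K) \<and> SW (x K) \<notin> tile_of Q (x K)"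
      using chain[OF dt ce x seM swM xS', of K] by simp
    then have ch: "SE l \<notin> tile_of Q l \<and> SW l \<notin> tile_of Q l" using lK by simp
    define T where "T = tile_of Q l"
    have T: "T \<in> Q" "l \<in> T" using tile_of_mem[OF pQ, of l] T_def by auto
    have Tsub: "T \<subseteq> insert l S" using tile_sub[OF pQ T(1)] .
    have "T = {l}"
    proof (rule ccontr)
      assume "T \<noteq> {l}"
      then obtain z where z: "z \<in> T" "z \<noteq> l" using T by blast
      then have "col z \<noteq> col l" using tile_inj[OF tl[OF T(1)] z(1) T(2)] by blast
      then show False
      proof (cases "col l < col z")
        case True
        then have "col l < col (tile_end T)" using tile_bounds(4)[OF tl[OF T(1)] z(1)] by simp
        then have "NE l \<in> T \<or> SE l \<in> T" using tile_succ[OF tl[OF T(1)] T(2)] by blast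
        then show False using ne Tsub ch T_def by blast
      next
        case False
        then have "col z < col l" using \<open>col z \<noteq> col l\<close> by simp
        then have "col (tile_start T) < col l" using tile_bounds(3)[OF tl[OF T(1)] z(1)] by simp
        then have "SW l \<in> T \<or> (fst l + 1, snd l) \<in> T" using tile_pred[OF tl[OF T(1)] T(2)] by blast
        then show False using up Tsub ch T_def by blast
      qed
    qed
    then have lQ: "{l} \<in> Q" using T by simp
    define P where "P = Q - {{l}}"
    have QP: "Q = insert {l} P" using lQ P_def by auto
    have lnot: "l \<notin> U" if "U \<in> P" for U
    proof
      assume "l \<in> U"
      moreover have "U \<in> Q" using that P_def by simp
      ultimately have "tile_of Q l = U" using tile_of_eq[OF pQ] by blast
      then have "U = tile_of Q l" by simp
      then show False using \<open>T = {l}\<close> T_def that P_def by simp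
    qed
    have pt: "partition_on S P"
    proof -
      have dj: "disjnt {l} (\<Union>P)" using lnot by (auto simp: disjnt_def)
      have "insert l S - {l} = S" using lS by auto
      then show ?thesis using partition_on_insert[OF dj, of "insert l S"] pQ QP by simp
    qed
    have dP: "dyck_tiling S P" using pt dt P_def by (auto simp: dyck_tiling_def)
    have tP: "tile_of Q y = tile_of P y" if "y \<in> S" for y
    proof -
      have "tile_of P y \<in> Q" "y \<in> tile_of P y" using tile_of_mem[OF pt that] P_def by auto
      then show ?thesis using tile_of_eq[OF pQ] by blast
    qed
    have ceP: "cover_expansive S P"
      unfolding cover_expansive_def
    proof (intro conjI allI impI)
      fix a assume a: "a \<in> S \<and> SE a \<in> S"
      then show "col (tile_start (tile_of P (SE a))) \<le> col (tile_start (tile_of P a))"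
        using ce_D1[OF ce, of a] tP by simp
    next
      fix a assume a: "a \<in> S \<and> SW a \<in> S"
      then show "col (tile_end (tile_of P a)) \<le> col (tile_end (tile_of P (SW a)))"
        using ce_D2[OF ce, of a] tP by simp
    qed
    show ?thesis using QP dP ceP A_def by blast
  qed
  have "B = insert {l} ` A" using fwd bwd by blast
  then show ?thesis using card_image[OF inj] A_def B_def by simp
qed

theorem proposition4p8:
  fixes j :: int and lam mu lamp :: "nat list" and l :: node
  assumes "is_partition lam" and "is_partition mu"
    and "addable lam l" and "col l = j"
    and "\<exists>m. addable mu m \<and> col m = j"
    and "is_partition lamp" and "young lamp = insert l (young lam)"
  shows "e_num lamp mu = e_num lam mu"
proof -
  note plam = assms(1) and pmu = assms(2) and plamp = assms(6) and ylamp = assms(7)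
  obtain a b where l: "l = (a,b)" by (cases l)
  obtain m where m: "addable mu m" "col m = j" using assms(5) by blast
  obtain a' b' where mab: "m = (a',b')" by (cases m)
  have lnot: "l \<notin> young lam" using assms(3) by (simp add: addable_def)
  obtain nu where nu: "is_partition nu" "young nu = insert m (young mu)" and mnot: "m \<notin> young mu"
    using m(1) by (auto simp: addable_def)
  have ab: "1 \<le> a" "1 \<le> b" using young_pos[of a b lamp] ylamp l by auto
  have a'b': "1 \<le> a'" "1 \<le> b'" using young_pos[of a' b' nu] nu mab by auto
  have colr: "b' - a' = b - a" using m(2) assms(4) l mab by (simp add: col_def)
  have lnot': "(a,b) \<notin> young lam" using lnot l by simp
  have NEl: "(a, b+1) \<notin> young lamp"
  proof
    assume h: "(a, b+1) \<in> young lamp"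
    then have "(a, b+1) \<in> young lam" using ylamp l by auto
    then have "(a,b) \<in> young lam" using young_down[OF plam] ab by force
    then show False using lnot' by simp
  qed
  have upl: "(a+1, b) \<notin> young lamp"
  proof
    assume h: "(a+1, b) \<in> young lamp"
    then have "(a+1, b) \<in> young lam" using ylamp l by auto
    then have "(a,b) \<in> young lam" using young_down[OF plam] ab by force
    then show False using lnot' by simp
  qed
  have gt: "(a, b+1) \<in> young mu" if "a < a'"
  proof -
    have "(a'-1, b') \<in> young nu" using young_down[OF nu(1), of a' b' "a'-1" b'] nu(2) mab that ab a'b' by auto
    then have "(a'-1, b') \<in> young mu" using nu(2) mab by auto
    then show ?thesis using young_down[OF pmu, of "a'-1" b' a "b+1"] that ab colr by auto
  qed
  have sub_le: "a' \<le> a" if "young mu \<subseteq> young lamp"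
    using gt NEl that by force
  show ?thesis
  proof (cases "young mu \<subseteq> young lam")
    case False
    have "\<not> young mu \<subseteq> young lamp"
    proof
      assume sub: "young mu \<subseteq> young lamp"
      then have "a' \<le> a" by (rule sub_le)
      from False sub have "l \<in> young mu" using ylamp by auto
      then have "m \<in> young mu" using young_down[OF pmu, of a b a' b'] l mab a'b' \<open>a' \<le> a\<close> colr by auto
      then show False using mnot by simp
    qed
    then show ?thesis using False by (simp add: e_num_def)
  next
    case True
    have sub2: "young mu \<subseteq> young lamp" using True ylamp by auto
    have le: "a' \<le> a" using sub_le[OF sub2] .
    define K where "K = nat (a - a')"
    define x where "x = (\<lambda>k::nat. (fst m + int k, snd m + int k))"
    define S where "S = young lam - young mu"
    have lmu: "l \<notin> young mu" using lnot True by auto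
    have S': "young lamp - young mu = insert l S" using ylamp lmu S_def by auto
    have lS: "l \<notin> S" using lnot S_def by simp
    have lK: "x K = l" using le colr by (simp add: x_def K_def l mab)
    have xS: "x k \<in> S" if "k < K" for k
    proof -
      have "x k = (a' + int k, b' + int k)" by (simp add: x_def mab)
      moreover have "(a' + int k, b' + int k) \<in> young lamp"
        using young_down[OF plamp, of a b "a' + int k" "b' + int k"] ylamp l that K_def colr a'b' by auto
      moreover have "(a' + int k, b' + int k) \<noteq> l" using l that K_def by auto
      moreover have "(a' + int k, b' + int k) \<notin> young mu"
        using young_down[OF pmu, of "a' + int k" "b' + int k" a' b'] mnot mab a'b' by auto
      ultimately show ?thesis using ylamp S_def by auto
    qed
    have seM: "SE m \<notin> insert l S"
    proof
      assume h: "SE m \<in> insert l S"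
      then have h1: "(a'-1, b') \<in> young lamp" "(a'-1, b') \<notin> young mu"
        using S' mab by (auto simp: SE_def)
      then have "1 \<le> a' - 1" using young_pos by blast
      then have "(a'-1, b') \<in> young nu" using young_down[OF nu(1), of a' b' "a'-1" b'] nu(2) mab a'b' by auto
      then show False using nu(2) mab h1 by auto
    qed
    have swM: "SW m \<notin> insert l S"
    proof
      assume h: "SW m \<in> insert l S"
      then have h1: "(a', b'-1) \<in> young lamp" "(a', b'-1) \<notin> young mu"
        using S' mab by (auto simp: SW_def)
      then have "1 \<le> b' - 1" using young_pos by blast
      then have "(a', b'-1) \<in> young nu" using young_down[OF nu(1), of a' b' a' "b'-1"] nu(2) mab a'b' by auto
      then show False using nu(2) mab h1 by auto
    qed
    have ne: "NE l \<notin> insert l S" using NEl S' l by (auto simp: NE_def)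
    have up: "(fst l + 1, snd l) \<notin> insert l S" using upl S' l by auto
    have xd: "\<And>k. x k = (fst m + int k, snd m + int k)" by (simp add: x_def)
    have "card {Q. dyck_tiling (insert l S) Q \<and> cover_expansive (insert l S) Q}
       = card {P. dyck_tiling S P \<and> cover_expansive S P}"
      by (rule key[OF xd lK lS xS seM swM ne up])
    then show ?thesis using True sub2 S' S_def by (simp add: e_num_def)
  qed
qed

end
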